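(* Let $T=2k$ with $k\ge 1$ an integer. Then every word $w=s_1\cdots s_T\in\Omega_T$ satisfies $2x_{12}(w)+x_{13}(w)+x_{32}(w)\ge k-1$. Moreover, if $s_T=2$, then $2x_{12}(w)+x_{13}(w)+x_{32}(w)> k-1$.
   Context: $\Omega_T$ is the set of words $s_1\cdots s_T$ over $\{1,2,3\}$ with $s_l\ne s_{l+1}$ for all $l$; for $i\ne j$, $x_{ij}(w)$ is the number of $l\in\{1,\dots,T-1\}$ with $s_ls_{l+1}=ij$. *)

theory Defs
  imports Main
begin

text \<open>Words s_1...s_T are lists w of length T with s_l = w ! (l-1).\<close>

definition Omega :: "nat \<Rightarrow> nat list set" where
  "Omega T = {w. length w = T \<and> set w \<subseteq> {1,2,3} \<and>
                 (\<forall>l. Suc l < T \<longrightarrow> w ! l \<noteq> w ! Suc l)}"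

definition x :: "nat \<Rightarrow> nat \<Rightarrow> nat list \<Rightarrow> nat" where
  "x i j w = card {l. Suc l < length w \<and> w ! l = i \<and> w ! Suc l = j}"

end

theory Submission
  imports Defs
begin

definition wt :: "nat \<Rightarrow> nat \<Rightarrow> nat" where
  "wt a b = (if a = 1 \<and> b = 2 then 2 else if a = 1 \<and> b = 3 then 1
             else if a = 3 \<and> b = 2 then 1 else 0)"

definition psi :: "nat \<Rightarrow> nat" where
  "psi a = (if a = 1 then 0 else if a = 3 then 1 else 2)"

lemma x_sum: "x i j w = (\<Sum>l<length w - 1. if w ! l = i \<and> w ! Suc l = j then 1 else 0)"
proof -
  have "{l. Suc l < length w \<and> w ! l = i \<and> w ! Suc l = j}
        = {l \<in> {..<length w - 1}. w ! l = i \<and> w ! Suc l = j}" by auto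
  then show ?thesis unfolding x_def by (simp add: sum.If_cases Int_def)
qed

lemma step:
  assumes "a \<in> {1,2,3}" "b \<in> {1,2,3}" "a \<noteq> b"
  shows "2 * wt a b + psi a \<ge> 1 + psi b"
  using assms by (auto simp: wt_def psi_def)

lemma main:
  assumes "w \<in> Omega T"
  shows "n < T \<Longrightarrow> 2 * (\<Sum>l<n. wt (w!l) (w!Suc l)) + psi (w!0) \<ge> n + psi (w!n)"
proof (induction n)
  case 0 then show ?case by simp
next
  case (Suc n)
  have len: "length w = T" and s: "set w \<subseteq> {1,2,3}" and d: "w ! n \<noteq> w ! Suc n"
    using assms Suc.prems unfolding Omega_def by auto
  have "w ! n \<in> {1,2,3}" "w ! Suc n \<in> {1,2,3}" 
  proof -
    have "w ! n \<in> set w" "w ! Suc n \<in> set w" using len Suc.prems by auto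
    then show "w ! n \<in> {1,2,3}" "w ! Suc n \<in> {1,2,3}" using s by blast+
  qed
  then have "2 * wt (w!n) (w!Suc n) + psi (w!n) \<ge> 1 + psi (w!Suc n)" using step d by blast
  then show ?case using Suc by simp
qed

lemma total:
  assumes "w \<in> Omega T"
  shows "2 * x 1 2 w + x 1 3 w + x 3 2 w = (\<Sum>l<T - 1. wt (w!l) (w!Suc l))"
proof -
  have len: "length w = T" using assms unfolding Omega_def by auto
  show ?thesis unfolding x_sum len
    by (simp add: wt_def sum_distrib_left flip: sum.distrib)
    (rule sum.cong; auto)
qed

theorem lemma3:
  fixes k T :: nat and w :: "nat list"
  assumes "k \<ge> 1" and "T = 2 * k" and "w \<in> Omega T"
  shows "2 * x 1 2 w + x 1 3 w + x 3 2 w \<ge> k - 1 \<and>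
         (last w = 2 \<longrightarrow> 2 * x 1 2 w + x 1 3 w + x 3 2 w > k - 1)"
proof -
  define S where "S = 2 * x 1 2 w + x 1 3 w + x 3 2 w"
  have len: "length w = T" using assms unfolding Omega_def by auto
  have "2 * S + psi (w!0) \<ge> (T - 1) + psi (w!(T-1))"
    using main[OF assms(3), of "T - 1"] total[OF assms(3)] assms(1,2) unfolding S_def by simp
  moreover have "psi (w!0) \<le> 2" by (simp add: psi_def)
  moreover have "last w = w ! (T - 1)" using len assms(1,2) by (subst last_conv_nth) auto
  ultimately show ?thesis using assms(1,2) unfolding S_def[symmetric]
    by (auto simp: psi_def split: if_splits)
qed

end
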